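(* Let $(X,T)$ be a minimal system and let $p_1,\ldots,p_d$ be non-constant integer polynomials. The following are equivalent: (1) there is a dense $G_\delta$ subset $\Omega$ of $X$ such that $\{(T^{p_1(n)}x,\ldots,T^{p_d(n)}x):n\in\mathbb{Z}\}$ is dense in $X^d$ for every $x\in\Omega$; (2) there exists $x\in X$ such that $\{(T^{p_1(n)}x,\ldots,T^{p_d(n)}x):n\in\mathbb{Z}\}$ is dense in $X^d$; (3) for any non-empty open subsets $U,V_1,\ldots,V_d$ of $X$ there is $n\in\mathbb{Z}$ with $U\cap T^{-p_1(n)}V_1\cap\cdots\cap T^{-p_d(n)}V_d\neq\emptyset$.
   Context: A system $(X,T)$ is a compact metric space with a homeomorphism $T$; minimal means every orbit is dense. An integer polynomial is a polynomial with rational coefficients taking integer values on the integers. *)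

theory Defs
  imports "HOL-Analysis.Analysis" "HOL-Computational_Algebra.Polynomial"
begin

definition tpow :: "'a set \<Rightarrow> ('a \<Rightarrow> 'a) \<Rightarrow> int \<Rightarrow> 'a \<Rightarrow> 'a" where
  "tpow X T n = (if n \<ge> 0 then T ^^ nat n else (inv_into X T) ^^ nat (- n))"

definition minimal_system :: "'a::metric_space set \<Rightarrow> ('a \<Rightarrow> 'a) \<Rightarrow> bool" where
  "minimal_system X T \<longleftrightarrow> compact X \<and> X \<noteq> {} \<and> (\<exists>S. homeomorphism X X T S) \<and>
     (\<forall>x\<in>X. closure {tpow X T n x | n. True} = X)"

definition int_poly :: "rat poly \<Rightarrow> bool" where
  "int_poly p \<longleftrightarrow> (\<forall>n::int. poly p (of_int n) \<in> \<int>)"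

definition pval :: "rat poly \<Rightarrow> int \<Rightarrow> int" where
  "pval p n = \<lfloor>poly p (of_int n)\<rfloor>"

definition poly_orbit :: "'a set \<Rightarrow> ('a \<Rightarrow> 'a) \<Rightarrow> nat \<Rightarrow> (nat \<Rightarrow> rat poly) \<Rightarrow> 'a \<Rightarrow> (nat \<Rightarrow> 'a) set" where
  "poly_orbit X T d ps x = {restrict (\<lambda>i. tpow X T (pval (ps i) n) x) {..<d} | n. True}"

definition prod_top :: "'a::topological_space set \<Rightarrow> nat \<Rightarrow> (nat \<Rightarrow> 'a) topology" where
  "prod_top X d = product_topology (\<lambda>_. top_of_set X) {..<d}"

end

theory Submission
  imports Defs
begin


lemma funpow_in: "T ` X \<subseteq> X \<Longrightarrow> x \<in> X \<Longrightarrow> (T ^^ k) x \<in> X"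
  by (induction k) auto

lemma funpow_cont: "T ` X \<subseteq> X \<Longrightarrow> continuous_on X T \<Longrightarrow> continuous_on X (T ^^ k)"
proof (induction k)
  case 0 then show ?case by (simp add: continuous_on_id)
next
  case (Suc k)
  have "continuous_on X (T \<circ> (T ^^ k))"
  proof (rule continuous_on_compose)
    show "continuous_on X (T ^^ k)" using Suc by simp
    have "(T ^^ k) ` X \<subseteq> X" using funpow_in[OF Suc.prems(1)] by auto
    then show "continuous_on ((T ^^ k) ` X) T" using Suc.prems(2) continuous_on_subset by blast
  qed
  then show ?case by simp
qed

context
  fixes X :: "'a::metric_space set" and T S
  assumes hom: "homeomorphism X X T S"
begin

lemma TX: "T ` X \<subseteq> X" and SX: "S ` X \<subseteq> X" and ST: "\<And>x. x \<in> X \<Longrightarrow> S (T x) = x"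
  and TS: "\<And>y. y \<in> X \<Longrightarrow> T (S y) = y" and cT: "continuous_on X T" and cS: "continuous_on X S"
  using hom by (auto simp: homeomorphism_def)

lemma inv_eq: "y \<in> X \<Longrightarrow> inv_into X T y = S y"
proof -
  assume y: "y \<in> X"
  have "inj_on T X" by (metis ST inj_onI)
  then show ?thesis using y SX TS by (intro inv_into_f_eq) auto
qed

lemma invpow: "x \<in> X \<Longrightarrow> (inv_into X T ^^ k) x = (S ^^ k) x"
proof (induction k)
  case (Suc k) then show ?case using inv_eq funpow_in[OF SX] by simp
qed simp

lemma tpow_alt: "x \<in> X \<Longrightarrow> tpow X T n x = (if n \<ge> 0 then (T ^^ nat n) x else (S ^^ nat (-n)) x)"
  by (simp add: tpow_def invpow)

lemma tpow_in: "x \<in> X \<Longrightarrow> tpow X T n x \<in> X"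
  using funpow_in[OF TX] funpow_in[OF SX] by (simp add: tpow_alt)

lemma tpow0: "tpow X T 0 x = x"
  by (simp add: tpow_def)

lemma tpow_cont: "continuous_on X (tpow X T n)"
proof (cases "n \<ge> 0")
  case True then show ?thesis using funpow_cont[OF TX cT] by (simp add: tpow_def)
next
  case False
  show ?thesis
    by (rule continuous_on_eq[OF funpow_cont[OF SX cS, of "nat (-n)"]]) (use False in \<open>simp add: tpow_alt\<close>)
qed

lemma tpow_succ: "x \<in> X \<Longrightarrow> tpow X T (n + 1) x = T (tpow X T n x)"
proof -
  assume x: "x \<in> X"
  consider "n \<ge> 0" | "n = -1" | "n < -1" by linarith
  then show ?thesis
  proof cases
    case 1
    then have "nat (n+1) = Suc (nat n)" by simp
    then show ?thesis using 1 x by (simp add: tpow_alt)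
  next
    case 2 then show ?thesis using x TS by (simp add: tpow_alt)
  next
    case 3
    then have "nat (- n) = Suc (nat (-(n+1)))" by simp
    then show ?thesis using 3 x TS funpow_in[OF SX x] by (simp add: tpow_alt)
  qed
qed

lemma tpow_pred: "x \<in> X \<Longrightarrow> tpow X T (n - 1) x = S (tpow X T n x)"
  using tpow_succ[of x "n - 1"] ST tpow_in by simp

lemma tpow_add: "x \<in> X \<Longrightarrow> tpow X T m (tpow X T n x) = tpow X T (m + n) x"
proof (induction m rule: int_induct[where k=0])
  case base then show ?case by (simp add: tpow0)
next
  case (step1 i)
  then show ?case using tpow_succ[of "tpow X T n x" i] tpow_succ[of x "i+n"] tpow_in
    by (simp add: algebra_simps)
next
  case (step2 i)
  then show ?case using tpow_pred tpow_in by (smt (verit))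
qed

end



lemma countable_base:
  fixes X :: "'a::metric_space set"
  assumes "compact X"
  shows "\<exists>B. countable B \<and> (\<forall>W\<in>B. openin (top_of_set X) W) \<and>
           (\<forall>U z. openin (top_of_set X) U \<and> z \<in> U \<longrightarrow> (\<exists>W\<in>B. z \<in> W \<and> W \<subseteq> U))"
proof -
  have tb: "\<forall>e>0. \<exists>k. finite k \<and> k \<subseteq> X \<and> X \<subseteq> (\<Union>x\<in>k. ball x e)"
    using seq_compact_imp_totally_bounded compact_imp_seq_compact assms by blast
  have "\<forall>k::nat. \<exists>F. finite F \<and> F \<subseteq> X \<and> X \<subseteq> (\<Union>x\<in>F. ball x (1 / Suc k))"
    using tb by simp
  then obtain F where F: "\<And>k. finite (F k) \<and> F k \<subseteq> X \<and> X \<subseteq> (\<Union>x\<in>F k. ball x (1 / Suc k))"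
    by metis
  define B where "B = (\<Union>k. (\<lambda>c. X \<inter> ball c (1 / Suc k)) ` F k)"
  have "countable B" unfolding B_def using F by (intro countable_UN countable_image) (auto intro: countable_finite)
  moreover have "\<forall>W\<in>B. openin (top_of_set X) W" unfolding B_def by (auto intro: openin_open_Int)
  moreover have "\<exists>W\<in>B. z \<in> W \<and> W \<subseteq> U" if U: "openin (top_of_set X) U" and z: "z \<in> U" for U z
  proof -
    obtain e where e: "e > 0" "ball z e \<inter> X \<subseteq> U" using U z openin_contains_ball by metis
    obtain k where k: "inverse (real (Suc k)) < e / 2"
      using real_arch_inverse[of "e/2"] e(1) by (metis half_gt_zero not0_implies_Suc)
    have zX: "z \<in> X" using U z openin_imp_subset by blast
    then obtain c where c: "c \<in> F k" "z \<in> ball c (1 / Suc k)" using F[of k] by blast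
    have "X \<inter> ball c (1 / Suc k) \<subseteq> U"
    proof
      fix w assume w: "w \<in> X \<inter> ball c (1 / Suc k)"
      have "dist z w \<le> dist z c + dist c w" by (rule dist_triangle)
      also have "\<dots> < e"
      proof -
        have "dist z c < 1 / Suc k" "dist c w < 1 / Suc k" using c w by (auto simp add: dist_commute)
        moreover have "1 / real (Suc k) < e / 2" using k by (simp only: inverse_eq_divide)
        ultimately show ?thesis by linarith
      qed
      finally show "w \<in> U" using w e(2) by auto
    qed
    moreover have "X \<inter> ball c (1 / Suc k) \<in> B" unfolding B_def using c by blast
    ultimately show ?thesis using c zX by blast
  qed
  ultimately show ?thesis by blast
qed

theorem mainTheorem3:
  fixes X :: "'a::metric_space set" and T :: "'a \<Rightarrow> 'a"
    and d :: nat and ps :: "nat \<Rightarrow> rat poly"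
  assumes "minimal_system X T"
    and "d \<ge> 1"
    and "\<And>i. i < d \<Longrightarrow> int_poly (ps i) \<and> degree (ps i) > 0"
  shows "((\<exists>\<Omega>. \<Omega> \<subseteq> X \<and> gdelta_in (top_of_set X) \<Omega> \<and> (top_of_set X) closure_of \<Omega> = X \<and>
            (\<forall>x\<in>\<Omega>. (prod_top X d) closure_of (poly_orbit X T d ps x) = topspace (prod_top X d)))
       \<longleftrightarrow> (\<exists>x\<in>X. (prod_top X d) closure_of (poly_orbit X T d ps x) = topspace (prod_top X d)))
       \<and> ((\<exists>x\<in>X. (prod_top X d) closure_of (poly_orbit X T d ps x) = topspace (prod_top X d))
       \<longleftrightarrow> (\<forall>U V. openin (top_of_set X) U \<and> U \<noteq> {} \<and>
              (\<forall>i<d. openin (top_of_set X) (V i) \<and> V i \<noteq> {}) \<longrightarrow>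
              (\<exists>n::int. U \<inter> (\<Inter>i<d. {y\<in>X. tpow X T (pval (ps i) n) y \<in> V i}) \<noteq> {})))"
proof -
  obtain S where hom: "homeomorphism X X T S" and cX: "compact X" and neX: "X \<noteq> {}"
    and mini: "\<And>x. x \<in> X \<Longrightarrow> closure {tpow X T n x | n. True} = X"
    using assms(1) unfolding minimal_system_def by blast
  let ?P = "prod_top X d"
  have topP: "topspace ?P = PiE {..<d} (\<lambda>_. X)" by (simp add: prod_top_def)
  have orbP: "restrict (\<lambda>i. tpow X T (pval (ps i) n) x) {..<d} \<in> poly_orbit X T d ps x" for n x
    unfolding poly_orbit_def by blast
  have box: "\<exists>n. \<forall>i<d. tpow X T (pval (ps i) n) x \<in> V i"
    if dense: "?P closure_of (poly_orbit X T d ps x) = topspace ?P"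
      and V: "\<forall>i<d. openin (top_of_set X) (V i) \<and> V i \<noteq> {}" for x V
  proof -
    have ne: "PiE {..<d} V \<noteq> {}" using V by (simp add: PiE_eq_empty_iff)
    have "openin ?P (PiE {..<d} V)" unfolding prod_top_def
      by (subst openin_PiE_gen) (use V in auto)
    then have "poly_orbit X T d ps x \<inter> PiE {..<d} V \<noteq> {}"
      using dense ne dense_intersects_open by blast
    then obtain n where "restrict (\<lambda>i. tpow X T (pval (ps i) n) x) {..<d} \<in> PiE {..<d} V"
      unfolding poly_orbit_def by blast
    then show ?thesis by auto
  qed
  define P1 where "P1 = (\<exists>\<Omega>. \<Omega> \<subseteq> X \<and> gdelta_in (top_of_set X) \<Omega> \<and> (top_of_set X) closure_of \<Omega> = X \<and>
            (\<forall>x\<in>\<Omega>. ?P closure_of (poly_orbit X T d ps x) = topspace ?P))"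
  define P2 where "P2 = (\<exists>x\<in>X. ?P closure_of (poly_orbit X T d ps x) = topspace ?P)"
  define P3 where "P3 = (\<forall>U V. openin (top_of_set X) U \<and> U \<noteq> {} \<and>
              (\<forall>i<d. openin (top_of_set X) (V i) \<and> V i \<noteq> {}) \<longrightarrow>
              (\<exists>n::int. U \<inter> (\<Inter>i<d. {y\<in>X. tpow X T (pval (ps i) n) y \<in> V i}) \<noteq> {}))"
  have 12: "P1 \<Longrightarrow> P2"
  proof -
    assume P1
    then obtain \<Omega> where Op: "\<Omega> \<subseteq> X" "(top_of_set X) closure_of \<Omega> = X"
      "\<forall>x\<in>\<Omega>. ?P closure_of (poly_orbit X T d ps x) = topspace ?P" unfolding P1_def by blast
    have "\<Omega> \<noteq> {}" using Op(2) neX by auto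
    then show P2 unfolding P2_def using Op by blast
  qed
  have 23: "P2 \<Longrightarrow> P3"
  proof -
    assume P2
    then obtain x where x: "x \<in> X" and dense: "?P closure_of (poly_orbit X T d ps x) = topspace ?P"
      unfolding P2_def by blast
    show P3 unfolding P3_def
    proof (intro allI impI)
      fix U V assume UV: "openin (top_of_set X) U \<and> U \<noteq> {} \<and>
              (\<forall>i<d. openin (top_of_set X) (V i) \<and> V i \<noteq> {})"
      obtain Op where Op: "open Op" "U = X \<inter> Op" using UV openin_open by metis
      obtain u where u: "u \<in> U" using UV by blast
      have "u \<in> closure {tpow X T n x | n. True}" using mini[OF x] u Op by auto
      then have "Op \<inter> {tpow X T n x | n. True} \<noteq> {}"
        using Op(1) u Op(2) open_Int_closure_eq_empty by blast
      then obtain m where m: "tpow X T m x \<in> Op" by blast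
      let ?y = "tpow X T m x"
      have yU: "?y \<in> U" using m Op tpow_in[OF hom x] by auto
      define V' where "V' i = X \<inter> tpow X T m -` V i" for i
      have V': "\<forall>i<d. openin (top_of_set X) (V' i) \<and> V' i \<noteq> {}"
      proof (intro allI impI conjI)
        fix i assume i: "i < d"
        show "openin (top_of_set X) (V' i)" unfolding V'_def
          using continuous_openin_preimage[OF tpow_cont[OF hom, of m], of X "V i"] UV i tpow_in[OF hom]
          by auto
        obtain v where v: "v \<in> V i" using UV i by blast
        have vX: "v \<in> X" using UV i v openin_imp_subset by blast
        have "tpow X T m (tpow X T (-m) v) = v" using tpow_add[OF hom vX] tpow0[OF hom] by simp
        then show "V' i \<noteq> {}" unfolding V'_def using v tpow_in[OF hom vX] by force
      qed
      obtain n where n: "\<forall>i<d. tpow X T (pval (ps i) n) x \<in> V' i" using box[OF dense V'] by blast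
      have "?y \<in> U \<inter> (\<Inter>i<d. {y\<in>X. tpow X T (pval (ps i) n) y \<in> V i})"
      proof -
        have "tpow X T (pval (ps i) n) ?y \<in> V i" if "i < d" for i
        proof -
          have "tpow X T m (tpow X T (pval (ps i) n) x) \<in> V i" using n that V'_def by auto
          moreover have "tpow X T m (tpow X T (pval (ps i) n) x) = tpow X T (pval (ps i) n) ?y"
            using tpow_add[OF hom x] by (simp add: add.commute)
          ultimately show ?thesis by simp
        qed
        then show ?thesis using yU tpow_in[OF hom x] by auto
      qed
      then show "\<exists>n. U \<inter> (\<Inter>i<d. {y\<in>X. tpow X T (pval (ps i) n) y \<in> V i}) \<noteq> {}" by blast
    qed
  qed
  have 31: "P3 \<Longrightarrow> P1"
  proof -
    assume P3
    obtain B where B: "countable B" "\<forall>W\<in>B. openin (top_of_set X) W"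
      "\<forall>U z. openin (top_of_set X) U \<and> z \<in> U \<longrightarrow> (\<exists>W\<in>B. z \<in> W \<and> W \<subseteq> U)"
      using countable_base[OF cX] by blast
    define B' where "B' = B - {{}}"
    have B'b: "\<exists>W\<in>B'. z \<in> W \<and> W \<subseteq> U" if "openin (top_of_set X) U" "z \<in> U" for U z
      using B(3) that unfolding B'_def by blast
    have B'ne: "B' \<noteq> {}" using neX B'b[of X] by auto
    define A where "A W = {y\<in>X. \<exists>n. \<forall>i<d. tpow X T (pval (ps i) n) y \<in> W i}" for W
    define G where "G = A ` PiE {..<d} (\<lambda>_. B')"
    have cG: "countable G" unfolding G_def B'_def using B(1)
      by (intro countable_image countable_PiE) auto
    have Gne: "G \<noteq> {}" unfolding G_def using B'ne by (simp add: PiE_eq_empty_iff)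
    have AX: "A W \<subseteq> X" for W unfolding A_def by auto
    have Aopen: "openin (top_of_set X) (A W)" if W: "W \<in> PiE {..<d} (\<lambda>_. B')" for W
    proof (subst openin_subopen, intro ballI)
      fix y assume "y \<in> A W"
      then obtain n where yX: "y \<in> X" and n: "\<forall>i<d. tpow X T (pval (ps i) n) y \<in> W i"
        unfolding A_def by blast
      define C where "C = \<Inter>((\<lambda>i. X \<inter> tpow X T (pval (ps i) n) -` W i) ` {..<d})"
      have "openin (top_of_set X) C" unfolding C_def
      proof (rule openin_Inter)
        show "(\<lambda>i. X \<inter> tpow X T (pval (ps i) n) -` W i) ` {..<d} \<noteq> {}" using assms(2) by (auto simp: lessThan_empty_iff)
        show "\<And>Sa. Sa \<in> (\<lambda>i. X \<inter> tpow X T (pval (ps i) n) -` W i) ` {..<d} \<Longrightarrow> openin (top_of_set X) Sa"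
        proof clarify
          fix i assume i: "i < d"
          have "W i \<in> B" using W i B'_def by auto
          then show "openin (top_of_set X) (X \<inter> tpow X T (pval (ps i) n) -` W i)"
            using continuous_openin_preimage[OF tpow_cont[OF hom, of "pval (ps i) n"], of X "W i"] tpow_in[OF hom] B(2) by auto
        qed
      qed auto
      moreover have "y \<in> C" using yX n unfolding C_def by auto
      moreover have "C \<subseteq> A W"
      proof
        fix z assume "z \<in> C"
        then have "z \<in> X" "\<forall>i<d. tpow X T (pval (ps i) n) z \<in> W i" unfolding C_def using assms(2) by (auto simp: lessThan_empty_iff)
        then show "z \<in> A W" unfolding A_def by blast
      qed
      ultimately show "\<exists>Ta. openin (top_of_set X) Ta \<and> y \<in> Ta \<and> Ta \<subseteq> A W" by blast
    qed
    have Adense: "(top_of_set X) closure_of (A W) = topspace (top_of_set X)"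
      if W: "W \<in> PiE {..<d} (\<lambda>_. B')" for W
    proof (subst dense_intersects_open, intro allI impI)
      fix U assume U: "openin (top_of_set X) U \<and> U \<noteq> {}"
      have "\<forall>i<d. openin (top_of_set X) (W i) \<and> W i \<noteq> {}" using W B(2) unfolding B'_def by auto
      then obtain n where "U \<inter> (\<Inter>i<d. {y\<in>X. tpow X T (pval (ps i) n) y \<in> W i}) \<noteq> {}"
        using \<open>P3\<close> U unfolding P3_def by blast
      then obtain y where y: "y \<in> U" "\<forall>i<d. tpow X T (pval (ps i) n) y \<in> W i" by blast
      have "y \<in> X" using U y openin_imp_subset by blast
      then have "y \<in> A W" unfolding A_def using y by blast
      then show "A W \<inter> U \<noteq> {}" using y by blast
    qed
    define \<Omega> where "\<Omega> = \<Inter>G"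
    have OX: "\<Omega> \<subseteq> X" unfolding \<Omega>_def using Gne AX G_def by blast
    have Og: "gdelta_in (top_of_set X) \<Omega>" unfolding \<Omega>_def
      using cG Gne Aopen G_def by (intro gdelta_in_Inter open_imp_gdelta_in) auto
    have reg: "regular_space (top_of_set X)"
      by (intro metrizable_imp_regular_space metrizable_space_subtopology metrizable_space_euclidean)
    have lc: "locally_compact_space (top_of_set X)"
      by (intro compact_imp_locally_compact_space compact_space_subtopology) (simp add: cX)
    have Oc: "(top_of_set X) closure_of \<Omega> = X" unfolding \<Omega>_def
    proof -
      have "\<And>Ta. Ta \<in> G \<Longrightarrow> openin (top_of_set X) Ta \<and> top_of_set X closure_of Ta = topspace (top_of_set X)"
        using Aopen Adense G_def by blast
      then have "top_of_set X closure_of \<Inter>G = topspace (top_of_set X)"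
        using Baire_category[of "top_of_set X" G] reg lc cG by blast
      then show "top_of_set X closure_of \<Inter>G = X" by simp
    qed
    have Od: "?P closure_of (poly_orbit X T d ps x) = topspace ?P" if x: "x \<in> \<Omega>" for x
    proof (subst dense_intersects_open, intro allI impI)
      fix Op assume Op: "openin ?P Op \<and> Op \<noteq> {}"
      then obtain f where f: "f \<in> Op" by blast
      obtain U where U: "\<forall>i\<in>{..<d}. openin (top_of_set X) (U i)" "f \<in> PiE {..<d} U" "PiE {..<d} U \<subseteq> Op"
        using Op f unfolding prod_top_def openin_product_topology_alt by fastforce
      have "\<forall>i\<in>{..<d}. \<exists>Wi\<in>B'. f i \<in> Wi \<and> Wi \<subseteq> U i" using U B'b by (auto simp: PiE_iff)
      then obtain Wf where Wf: "\<forall>i\<in>{..<d}. Wf i \<in> B' \<and> f i \<in> Wf i \<and> Wf i \<subseteq> U i" by metis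
      define W where "W = restrict Wf {..<d}"
      have WP: "W \<in> PiE {..<d} (\<lambda>_. B')" unfolding W_def using Wf by auto
      then have "x \<in> A W" using x unfolding \<Omega>_def G_def by blast
      then obtain n where n: "\<forall>i<d. tpow X T (pval (ps i) n) x \<in> W i" unfolding A_def by blast
      have "restrict (\<lambda>i. tpow X T (pval (ps i) n) x) {..<d} \<in> PiE {..<d} U"
        using n Wf unfolding W_def by auto
      then show "poly_orbit X T d ps x \<inter> Op \<noteq> {}" using orbP U(3) by blast
    qed
    show P1 unfolding P1_def using OX Og Oc Od by blast
  qed
  have "(P1 \<longleftrightarrow> P2) \<and> (P2 \<longleftrightarrow> P3)" using 12 23 31 by blast
  then show ?thesis unfolding P1_def P2_def P3_def by simp
qed

end
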